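(* Let $\mathcal{F}$ be a set of functions satisfying premise (P) below, and let $F\in\mathcal{F}$. Then for every positive integer $n$, either every closed $\{\neq_2\}\mid\{F\}$-network with exactly $n$ vertices on the $F$-side has value $0$, or every such network has nonzero value.
   Context: $\neq_2$ is the binary function with $\neq_2(x,y)=1$ if $x\neq y$ and $0$ otherwise. $\mathrm{Holant}_{\neq}(\mathcal{F})$ denotes the problem $\#\{\neq_2\}\mid\mathcal{F}$: inputs are finite bipartite multigraphs in which every vertex on one side has degree 2 and carries $\neq_2$ (so these act as edges), and every vertex $v$ on the other side ("$F$-side") carries a function $F_v\in\mathcal{F}$ of arity $\deg(v)$ with an ordering of its incident edges; the value is $\sum_{\sigma:E\to\{0,1\}}\prod_v(\text{vertex functions})$. A gadget is such a network with dangling edges at $F$-side vertices; its function is obtained by fixing the dangling edges and summing; a function is realizable if it is the function of a gadget. Premise (P): every binary function realizable in $\mathrm{Holant}_{\neq}(\mathcal{F})$ is of the form $\lambda\cdot\neq_2$ for some $\lambda\in\mathbb{C}$, and every arity-4 function realizable in $\mathrm{Holant}_{\neq}(\mathcal{F})$ is of the form $(x_1,\dots,x_4)\mapsto\lambda\,\neq_2(x_{\tau(1)},x_{\tau(2)})\neq_2(x_{\tau(3)},x_{\tau(4)})$ for some $\lambda\in\mathbb{C}$ and some permutation $\tau$ of $\{1,2,3,4\}$. *)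

theory Defs
  imports Complex_Main "HOL-Library.FuncSet"
begin

text \<open>A signature is a pair (arity, function on Boolean lists); only its values on
lists of length equal to the arity matter. Each degree-2 vertex carrying the disequality
connects two slots (an entry of es); dangling edges are the slots listed in ds,
in order.\<close>

type_synonym sig = "nat \<times> (bool list \<Rightarrow> complex)"
type_synonym slot = "nat \<times> nat"

definition neq2 :: "bool \<Rightarrow> bool \<Rightarrow> complex" where
  "neq2 x y = (if x \<noteq> y then 1 else 0)"

definition slots :: "nat \<Rightarrow> (nat \<Rightarrow> sig) \<Rightarrow> slot set" where
  "slots m sg = {(v, i). v < m \<and> i < fst (sg v)}"

definition edge_ends :: "(slot \<times> slot) list \<Rightarrow> slot list" where
  "edge_ends es = concat (map (\<lambda>(a, b). [a, b]) es)"

definition wf_gadget :: "sig set \<Rightarrow> nat \<Rightarrow> (nat \<Rightarrow> sig) \<Rightarrow> (slot \<times> slot) list \<Rightarrow> slot list \<Rightarrow> bool" where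
  "wf_gadget FF m sg es ds \<longleftrightarrow>
     (\<forall>v<m. sg v \<in> FF) \<and>
     distinct (edge_ends es @ ds) \<and>
     set (edge_ends es @ ds) = slots m sg"

text \<open>Value of the gadget at the assignment xs of its dangling edges: sum over all
edge assignments (one bit per slot = per edge of the bipartite graph incident to
an F-side vertex) agreeing with xs on the dangling edges.\<close>
definition gadget_val :: "nat \<Rightarrow> (nat \<Rightarrow> sig) \<Rightarrow> (slot \<times> slot) list \<Rightarrow> slot list \<Rightarrow> bool list \<Rightarrow> complex" where
  "gadget_val m sg es ds xs =
     (\<Sum>\<sigma> \<in> {\<sigma> \<in> PiE (slots m sg) (\<lambda>_. UNIV). \<forall>j<length ds. \<sigma> (ds ! j) = xs ! j}.
        (\<Prod>v<m. snd (sg v) (map (\<lambda>i. \<sigma> (v, i)) [0..<fst (sg v)])) *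
        prod_list (map (\<lambda>(a, b). neq2 (\<sigma> a) (\<sigma> b)) es))"

definition premise_P :: "sig set \<Rightarrow> bool" where
  "premise_P FF \<longleftrightarrow>
     (\<forall>m sg es ds. wf_gadget FF m sg es ds \<and> length ds = 2 \<longrightarrow>
        (\<exists>c. \<forall>x y. gadget_val m sg es ds [x, y] = c * neq2 x y)) \<and>
     (\<forall>m sg es ds. wf_gadget FF m sg es ds \<and> length ds = 4 \<longrightarrow>
        (\<exists>c \<tau>. bij_betw \<tau> {0..<4::nat} {0..<4} \<and>
           (\<forall>xs. length xs = 4 \<longrightarrow>
              gadget_val m sg es ds xs =
                c * neq2 (xs ! \<tau> 0) (xs ! \<tau> 1) * neq2 (xs ! \<tau> 2) (xs ! \<tau> 3))))"

end

theory Submission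
  imports Defs "HOL-Library.Multiset"
begin


lemma fin_len: "finite {xs::bool list. length xs = k}"
  using finite_lists_length_eq[of "UNIV::bool set" k] by simp

lemma sum_len_Suc:
  "(\<Sum>xs\<in>{xs::bool list. length xs = Suc k}. f xs) =
   (\<Sum>x\<in>UNIV. \<Sum>ys\<in>{ys. length ys = k}. f (x # ys))"
proof -
  have e: "{xs::bool list. length xs = Suc k} = (\<lambda>(x,ys). x # ys) ` (UNIV \<times> {ys. length ys = k})"
    by (auto simp: length_Suc_conv image_iff)
  have i: "inj_on (\<lambda>(x::bool,ys). x # ys) (UNIV \<times> {ys. length ys = k})"
    by (auto simp: inj_on_def)
  show ?thesis unfolding e
    by (subst sum.reindex[OF i]) (simp add: sum.cartesian_product split_def)
qed

lemma sum_len0: "(\<Sum>xs\<in>{xs::bool list. length xs = 0}. f xs) = f []"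
  by simp

lemma sum4: "(\<Sum>xs\<in>{xs::bool list. length xs = 4}. f xs) =
  (\<Sum>a\<in>UNIV. \<Sum>b\<in>UNIV. \<Sum>c\<in>UNIV. \<Sum>d\<in>UNIV. f [a,b,c,d])"
  by (simp add: numeral_eq_Suc sum_len_Suc)

lemma idx4: "(i::nat) < 4 \<Longrightarrow> i = 0 \<or> i = 1 \<or> i = 2 \<or> i = 3" by auto

lemma K1:
  assumes "i0 < 4" "i1 < 4" "i2 < 4" "i3 < 4" "distinct [i0,i1,i2,i3]"
  shows "(\<Sum>xs\<in>{xs::bool list. length xs = 4}. neq2 (xs!0) (xs!1) * neq2 (xs!2) (xs!3) *
           (c * neq2 (xs!i0) (xs!i1) * neq2 (xs!i2) (xs!i3))) = 0 \<longleftrightarrow> c = 0"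
  using idx4[OF assms(1)] idx4[OF assms(2)] idx4[OF assms(3)] idx4[OF assms(4)] assms(5)
  unfolding sum4 UNIV_bool
  by (elim disjE; simp add: neq2_def)

lemma K2:
  assumes "i0 < 4" "i1 < 4" "i2 < 4" "i3 < 4" "distinct [i0,i1,i2,i3]"
  shows "(\<Sum>xs\<in>{xs::bool list. length xs = 4}. neq2 (xs!0) (xs!2) * neq2 (xs!1) (xs!3) *
           (c * neq2 (xs!i0) (xs!i1) * neq2 (xs!i2) (xs!i3))) = 0 \<longleftrightarrow> c = 0"
  using idx4[OF assms(1)] idx4[OF assms(2)] idx4[OF assms(3)] idx4[OF assms(4)] assms(5)
  unfolding sum4 UNIV_bool
  by (elim disjE; simp add: neq2_def)

lemma ee_Nil[simp]: "edge_ends [] = []" by (simp add: edge_ends_def)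
lemma ee_Cons[simp]: "edge_ends (e # es) = fst e # snd e # edge_ends es"
  by (cases e) (simp add: edge_ends_def)
lemma ee_append[simp]: "edge_ends (A @ B) = edge_ends A @ edge_ends B"
  by (simp add: edge_ends_def)
lemma ee_set: "x \<in> set (edge_ends es) \<longleftrightarrow> (\<exists>e\<in>set es. x = fst e \<or> x = snd e)"
  by (induction es) auto
lemma ee_empty: "edge_ends es = [] \<Longrightarrow> es = []"
  by (cases es) auto

lemma ee_mset_Cons: "mset (edge_ends (e # es)) = add_mset (fst e) (add_mset (snd e) (mset (edge_ends es)))"
  by simp

lemma ee_mset_eq:
  assumes "mset (edge_ends X) = mset (edge_ends Y)"
  shows "distinct (edge_ends X) = distinct (edge_ends Y)" "set (edge_ends X) = set (edge_ends Y)"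
  using mset_eq_imp_distinct_iff[OF assms] mset_eq_setD[OF assms] by auto

lemma match:
  fixes Q :: "(slot \<times> slot) list \<Rightarrow> complex"
  assumes perm: "\<And>A e B. Q (A @ e # B) = Q (e # A @ B)"
  and flip: "\<And>a b A. Q ((a,b) # A) = Q ((b,a) # A)"
  and sw: "\<And>a b c d R. distinct (edge_ends ((a,b)#(c,d)#R)) \<Longrightarrow> set (edge_ends ((a,b)#(c,d)#R)) = S
            \<Longrightarrow> (Q ((a,b)#(c,d)#R) = 0 \<longleftrightarrow> Q ((a,c)#(b,d)#R) = 0)"
  shows "distinct (edge_ends (pre@es1)) \<Longrightarrow> set (edge_ends (pre@es1)) = S \<Longrightarrow>
         distinct (edge_ends (pre@es2)) \<Longrightarrow> set (edge_ends (pre@es2)) = S \<Longrightarrow>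
         (Q (pre@es1) = 0 \<longleftrightarrow> Q (pre@es2) = 0)"
proof (induction es2 arbitrary: pre es1)
  case Nil
  have "set (edge_ends es1) \<subseteq> set (edge_ends pre)" "set (edge_ends pre) \<inter> set (edge_ends es1) = {}"
    using Nil.prems by auto
  then have "set (edge_ends es1) = {}" by (metis Int_absorb2 Int_commute)
  then have "es1 = []" using ee_empty by auto
  then show ?case by simp
next
  case (Cons e2 rest2)
  obtain a c where e2: "e2 = (a,c)" by (cases e2)
  have a1: "a \<in> set (edge_ends (pre @ e2 # rest2))" by (simp add: e2)
  then have a2: "a \<in> set (edge_ends (pre @ es1))" by (simp only: Cons.prems(2,4))
  have a3: "a \<notin> set (edge_ends pre)" using Cons.prems(3) e2 by simp
  have "a \<in> set (edge_ends es1)" using a2 a3 by simp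
  then obtain e where e: "e \<in> set es1" "a = fst e \<or> a = snd e" by (auto simp: ee_set)
  obtain b where eb: "e = (a,b) \<or> e = (b,a)" using e(2) by (metis prod.collapse)
  obtain L1 L2 where es1: "es1 = L1 @ e # L2" using split_list[OF e(1)] by blast
  have Q1: "Q (pre@es1) = Q ((a,b)#pre@L1@L2)"
  proof -
    have "Q (pre@es1) = Q ((pre@L1) @ e # L2)" by (simp add: es1)
    also have "\<dots> = Q (e # pre @ L1 @ L2)" using perm[of "pre@L1" e L2] by simp
    also have "\<dots> = Q ((a,b)#pre@L1@L2)" using eb flip[of b a "pre@L1@L2"] by (elim disjE) simp_all
    finally show ?thesis .
  qed
  have M1: "mset (edge_ends ((a,b)#pre@L1@L2)) = mset (edge_ends (pre@es1))"
    using eb unfolding es1 by (auto simp: ac_simps)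
  have D1: "distinct (edge_ends ((a,b)#pre@L1@L2))" "set (edge_ends ((a,b)#pre@L1@L2)) = S"
    using Cons.prems(1,2) ee_mset_eq[OF M1] by auto
  have Q2: "Q (pre @ e2 # rest2) = Q ((pre@[(a,c)]) @ rest2)" by (simp add: e2)
  have M2: "mset (edge_ends ((pre@[(a,c)]) @ rest2)) = mset (edge_ends (pre @ e2 # rest2))"
    by (simp add: e2)
  have P2: "distinct (edge_ends ((pre@[(a,c)]) @ rest2))" "set (edge_ends ((pre@[(a,c)]) @ rest2)) = S"
    using Cons.prems(3,4) ee_mset_eq[OF M2] by auto
  show ?case
  proof (cases "b = c")
    case True
    have "Q ((a,b)#pre@L1@L2) = Q ((pre@[(a,c)]) @ (L1@L2))"
      using perm[of pre "(a,c)" "L1@L2"] True by simp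
    moreover have M: "mset (edge_ends ((pre@[(a,c)]) @ (L1@L2))) = mset (edge_ends ((a,b)#pre@L1@L2))"
      using True by (simp add: ac_simps)
    moreover have "distinct (edge_ends ((pre@[(a,c)]) @ (L1@L2)))"
         "set (edge_ends ((pre@[(a,c)]) @ (L1@L2))) = S" using D1 ee_mset_eq[OF M] by auto
    ultimately show ?thesis using Cons.IH[OF _ _ P2] Q1 Q2 by simp
  next
    case False
    have c0: "c \<in> set (edge_ends (pre @ e2 # rest2))" by (simp add: e2)
    have c1: "c \<noteq> a" "c \<notin> set (edge_ends pre)" using Cons.prems(3) e2 by auto
    have c2: "c \<in> S" using c0 by (simp only: Cons.prems(4))
    have "c \<in> set (edge_ends ((a,b)#pre@L1@L2))" using c2 by (simp only: D1(2))
    then have "c \<in> set (edge_ends (L1@L2))" using c1 False by simp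
    then obtain e' where e': "e' \<in> set (L1@L2)" "c = fst e' \<or> c = snd e'"
      by (auto simp only: ee_set)
    obtain d where ed: "e' = (c,d) \<or> e' = (d,c)" using e'(2) by (metis prod.collapse)
    obtain M1 M2 where LM: "L1@L2 = M1 @ e' # M2" using split_list[OF e'(1)] by blast
    define R where "R = pre@M1@M2"
    have "Q ((a,b)#pre@L1@L2) = Q (((a,b)#pre@M1) @ e' # M2)" by (simp add: LM)
    also have "\<dots> = Q (e' # (a,b) # R)" using perm[of "(a,b)#pre@M1" e' M2] by (simp add: R_def)
    also have "\<dots> = Q ((c,d) # (a,b) # R)" using ed flip[of d c "(a,b)#R"] by (elim disjE) simp_all
    also have "\<dots> = Q ((a,b) # (c,d) # R)" using perm[of "[(c,d)]" "(a,b)" R] by simp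
    finally have Q3: "Q ((a,b)#pre@L1@L2) = Q ((a,b) # (c,d) # R)" .
    have MM2: "mset (edge_ends ((a,b)#(c,d)#R)) = mset (edge_ends ((a,b)#pre@L1@L2))"
      using ed unfolding LM R_def by (auto simp: ac_simps)
    have D2: "distinct (edge_ends ((a,b)#(c,d)#R))" "set (edge_ends ((a,b)#(c,d)#R)) = S"
      using D1 ee_mset_eq[OF MM2] by auto
    have "Q ((a,c)#(b,d)#R) = Q ([(a,c)] @ (b,d) # R)" by simp
    also have "\<dots> = Q ((b,d) # (a,c) # pre @ M1 @ M2)" by (simp only: perm R_def) simp
    also have "\<dots> = Q (((a,c) # pre) @ (b,d) # (M1 @ M2))" by (simp only: perm) simp
    also have "\<dots> = Q ((pre@[(a,c)]) @ ((b,d) # M1 @ M2))" using perm[of pre "(a,c)"] by simp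
    finally have Q4: "Q ((a,c)#(b,d)#R) = Q ((pre@[(a,c)]) @ ((b,d) # M1 @ M2))" .
    have MM3: "mset (edge_ends ((pre@[(a,c)]) @ ((b,d) # M1 @ M2))) = mset (edge_ends ((a,b)#(c,d)#R))"
      unfolding R_def by (simp add: ac_simps)
    have D3: "distinct (edge_ends ((pre@[(a,c)]) @ ((b,d) # M1 @ M2)))"
      "set (edge_ends ((pre@[(a,c)]) @ ((b,d) # M1 @ M2))) = S"
      using D2 ee_mset_eq[OF MM3] by auto
    show ?thesis using Cons.IH[OF D3 P2] Q1 Q2 Q3 Q4 sw[OF D2] by simp
  qed
qed

lemma neq2_sym: "neq2 x y = neq2 y x" by (auto simp: neq2_def)

lemma fin_slots: "finite (slots n sg)"
proof -
  have "slots n sg = Sigma {..<n} (\<lambda>v. {..<fst (sg v)})" by (auto simp: slots_def)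
  then show ?thesis by (simp add: finite_SigmaI)
qed

lemma gv_perm: "gadget_val n sg (A @ e # B) ds xs = gadget_val n sg (e # A @ B) ds xs"
  by (simp add: gadget_val_def mult_ac)

lemma gv_flip: "gadget_val n sg ((a,b) # A) ds xs = gadget_val n sg ((b,a) # A) ds xs"
  by (simp add: gadget_val_def neq2_sym)

lemma fiber:
  fixes h :: "('a \<Rightarrow> bool) \<Rightarrow> complex"
  assumes "finite P"
  shows "(\<Sum>\<sigma>\<in>P. g (map \<sigma> ds) * h \<sigma>) =
    (\<Sum>xs\<in>{xs::bool list. length xs = length ds}. g xs *
       (\<Sum>\<sigma>\<in>{\<sigma>\<in>P. \<forall>j<length ds. \<sigma> (ds!j) = xs!j}. h \<sigma>))"
proof -
  have "(\<Sum>\<sigma>\<in>P. g (map \<sigma> ds) * h \<sigma>) =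
     (\<Sum>xs\<in>{xs::bool list. length xs = length ds}. \<Sum>\<sigma>\<in>{\<sigma>\<in>P. map \<sigma> ds = xs}. g (map \<sigma> ds) * h \<sigma>)"
    by (rule sum.group[symmetric]) (auto simp: assms fin_len)
  also have "\<dots> = (\<Sum>xs\<in>{xs::bool list. length xs = length ds}. g xs *
       (\<Sum>\<sigma>\<in>{\<sigma>\<in>P. \<forall>j<length ds. \<sigma> (ds!j) = xs!j}. h \<sigma>))"
  proof (rule sum.cong[OF refl])
    fix xs :: "bool list" assume "xs \<in> {xs. length xs = length ds}"
    then have E: "{\<sigma>\<in>P. map \<sigma> ds = xs} = {\<sigma>\<in>P. \<forall>j<length ds. \<sigma> (ds!j) = xs!j}"
      by (auto simp: list_eq_iff_nth_eq)
    have "(\<Sum>\<sigma>\<in>{\<sigma>\<in>P. map \<sigma> ds = xs}. g (map \<sigma> ds) * h \<sigma>) = (\<Sum>\<sigma>\<in>{\<sigma>\<in>P. map \<sigma> ds = xs}. g xs * h \<sigma>)"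
      by (rule sum.cong) auto
    then show "(\<Sum>\<sigma>\<in>{\<sigma>\<in>P. map \<sigma> ds = xs}. g (map \<sigma> ds) * h \<sigma>) = g xs *
       (\<Sum>\<sigma>\<in>{\<sigma>\<in>P. \<forall>j<length ds. \<sigma> (ds!j) = xs!j}. h \<sigma>)"
      by (simp add: E sum_distrib_left)
  qed
  finally show ?thesis .
qed

lemma gv_switch:
  assumes P: "premise_P FF" and sgF: "\<forall>v<n. sg v \<in> FF"
  and D: "distinct (edge_ends ((a,b)#(c,d)#R))" "set (edge_ends ((a,b)#(c,d)#R)) = slots n sg"
  shows "gadget_val n sg ((a,b)#(c,d)#R) [] [] = 0 \<longleftrightarrow> gadget_val n sg ((a,c)#(b,d)#R) [] [] = 0"
proof -
  let ?ds = "[a,b,c,d]"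
  have wf: "wf_gadget FF n sg R ?ds" unfolding wf_gadget_def using sgF D by auto
  have P4: "\<forall>m sg es ds. wf_gadget FF m sg es ds \<and> length ds = 4 \<longrightarrow>
        (\<exists>c \<tau>. bij_betw \<tau> {0..<4::nat} {0..<4} \<and>
           (\<forall>xs. length xs = 4 \<longrightarrow>
              gadget_val m sg es ds xs =
                c * neq2 (xs ! \<tau> 0) (xs ! \<tau> 1) * neq2 (xs ! \<tau> 2) (xs ! \<tau> 3)))"
    using P unfolding premise_P_def by (rule conjunct2)
  have "wf_gadget FF n sg R ?ds \<and> length ?ds = 4" using wf by simp
  then have "\<exists>c \<tau>. bij_betw \<tau> {0..<4::nat} {0..<4} \<and>
           (\<forall>xs. length xs = 4 \<longrightarrow>
              gadget_val n sg R ?ds xs =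
                c * neq2 (xs ! \<tau> 0) (xs ! \<tau> 1) * neq2 (xs ! \<tau> 2) (xs ! \<tau> 3))"
    using P4 by blast
  then obtain C \<tau> where bij: "bij_betw \<tau> {0..<4::nat} {0..<4}" and
    G0: "\<forall>xs. length xs = 4 \<longrightarrow> gadget_val n sg R ?ds xs =
         C * neq2 (xs ! \<tau> 0) (xs ! \<tau> 1) * neq2 (xs ! \<tau> 2) (xs ! \<tau> 3)"
    by blast
  have G: "gadget_val n sg R ?ds xs =
         C * neq2 (xs ! \<tau> 0) (xs ! \<tau> 1) * neq2 (xs ! \<tau> 2) (xs ! \<tau> 3)" if "length xs = 4" for xs
    using G0 that by blast
  have t: "\<tau> 0 < 4" "\<tau> 1 < 4" "\<tau> 2 < 4" "\<tau> 3 < 4"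
    using bij_betw_apply[OF bij, of 0] bij_betw_apply[OF bij, of 1]
      bij_betw_apply[OF bij, of 2] bij_betw_apply[OF bij, of 3] by simp_all
  have inj: "inj_on \<tau> {0..<4}" using bij by (simp add: bij_betw_def)
  have td: "distinct [\<tau> 0, \<tau> 1, \<tau> 2, \<tau> 3]"
    using inj_onD[OF inj, of 0 1] inj_onD[OF inj, of 0 2] inj_onD[OF inj, of 0 3]
      inj_onD[OF inj, of 1 2] inj_onD[OF inj, of 1 3] inj_onD[OF inj, of 2 3] by auto
  define PP where "PP = PiE (slots n sg) (\<lambda>_. UNIV :: bool set)"
  have fP: "finite PP" unfolding PP_def by (simp add: fin_slots finite_PiE)
  define W where "W \<sigma> = (\<Prod>v<n. snd (sg v) (map (\<lambda>i. \<sigma> (v, i)) [0..<fst (sg v)]))" for \<sigma> :: "slot \<Rightarrow> bool"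
  define pl where "pl es \<sigma> = prod_list (map (\<lambda>(a, b). neq2 (\<sigma> a) (\<sigma> b)) es)" for es and \<sigma> :: "slot \<Rightarrow> bool"
  define g1 where "g1 xs = neq2 (xs!0) (xs!1) * neq2 (xs!2) (xs!3)" for xs :: "bool list"
  define g2 where "g2 xs = neq2 (xs!0) (xs!2) * neq2 (xs!1) (xs!3)" for xs :: "bool list"
  have L4: "length ?ds = 4" by simp
  have gv0: "gadget_val n sg es [] [] = (\<Sum>\<sigma>\<in>PP. W \<sigma> * pl es \<sigma>)" for es
    by (simp add: gadget_val_def PP_def W_def pl_def)
  have gvR: "gadget_val n sg R ?ds xs = (\<Sum>\<sigma>\<in>{\<sigma>\<in>PP. \<forall>j<length ?ds. \<sigma> (?ds!j) = xs!j}. W \<sigma> * pl R \<sigma>)" for xs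
    unfolding gadget_val_def PP_def W_def pl_def by (rule refl)
  have fib: "(\<Sum>\<sigma>\<in>PP. g (map \<sigma> ?ds) * (W \<sigma> * pl R \<sigma>)) =
     (\<Sum>xs\<in>{xs::bool list. length xs = 4}. g xs * gadget_val n sg R ?ds xs)" for g
    using fiber[OF fP, where g=g and ds="?ds" and h="\<lambda>\<sigma>. W \<sigma> * pl R \<sigma>"] unfolding gvR L4 by simp
  have e1: "gadget_val n sg ((a,b)#(c,d)#R) [] [] =
     (\<Sum>xs\<in>{xs::bool list. length xs = 4}. neq2 (xs!0) (xs!1) * neq2 (xs!2) (xs!3) *
           (C * neq2 (xs!\<tau> 0) (xs!\<tau> 1) * neq2 (xs!\<tau> 2) (xs!\<tau> 3)))"
  proof -
    have "gadget_val n sg ((a,b)#(c,d)#R) [] [] = (\<Sum>\<sigma>\<in>PP. g1 (map \<sigma> ?ds) * (W \<sigma> * pl R \<sigma>))"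
      unfolding gv0 by (rule sum.cong) (simp_all add: pl_def g1_def mult_ac)
    also have "\<dots> = (\<Sum>xs\<in>{xs::bool list. length xs = 4}. g1 xs * gadget_val n sg R ?ds xs)"
      by (rule fib)
    also have "\<dots> = (\<Sum>xs\<in>{xs::bool list. length xs = 4}. neq2 (xs!0) (xs!1) * neq2 (xs!2) (xs!3) *
           (C * neq2 (xs!\<tau> 0) (xs!\<tau> 1) * neq2 (xs!\<tau> 2) (xs!\<tau> 3)))"
      by (rule sum.cong) (simp_all add: G g1_def)
    finally show ?thesis .
  qed
  have e2: "gadget_val n sg ((a,c)#(b,d)#R) [] [] =
     (\<Sum>xs\<in>{xs::bool list. length xs = 4}. neq2 (xs!0) (xs!2) * neq2 (xs!1) (xs!3) *
           (C * neq2 (xs!\<tau> 0) (xs!\<tau> 1) * neq2 (xs!\<tau> 2) (xs!\<tau> 3)))"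
  proof -
    have "gadget_val n sg ((a,c)#(b,d)#R) [] [] = (\<Sum>\<sigma>\<in>PP. g2 (map \<sigma> ?ds) * (W \<sigma> * pl R \<sigma>))"
      unfolding gv0 by (rule sum.cong) (simp_all add: pl_def g2_def mult_ac)
    also have "\<dots> = (\<Sum>xs\<in>{xs::bool list. length xs = 4}. g2 xs * gadget_val n sg R ?ds xs)"
      by (rule fib)
    also have "\<dots> = (\<Sum>xs\<in>{xs::bool list. length xs = 4}. neq2 (xs!0) (xs!2) * neq2 (xs!1) (xs!3) *
           (C * neq2 (xs!\<tau> 0) (xs!\<tau> 1) * neq2 (xs!\<tau> 2) (xs!\<tau> 3)))"
      by (rule sum.cong) (simp_all add: G g2_def)
    finally show ?thesis .
  qed
  show ?thesis unfolding e1 e2 K1[OF t td] K2[OF t td] ..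
qed

lemma gv_sg_cong:
  assumes "\<forall>v<n. sg v = sg' v"
  shows "slots n sg = slots n sg'" "gadget_val n sg = gadget_val n sg'"
proof -
  show s: "slots n sg = slots n sg'" using assms by (auto simp: slots_def)
  show "gadget_val n sg = gadget_val n sg'"
    unfolding gadget_val_def s using assms by (intro ext sum.cong refl arg_cong2[where f="(*)"] prod.cong) auto
qed

theorem mainTheorem9:
  fixes FF :: "sig set" and F :: sig and n :: nat
  assumes "premise_P FF" and "F \<in> FF" and "n > 0"
  shows "(\<forall>sg es. wf_gadget {F} n sg es [] \<longrightarrow> gadget_val n sg es [] [] = 0) \<or>
         (\<forall>sg es. wf_gadget {F} n sg es [] \<longrightarrow> gadget_val n sg es [] [] \<noteq> 0)"
proof (rule disjCI)
  assume "\<not> (\<forall>sg es. wf_gadget {F} n sg es [] \<longrightarrow> gadget_val n sg es [] [] \<noteq> 0)"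
  then obtain sg0 es0 where w0: "wf_gadget {F} n sg0 es0 []" and z0: "gadget_val n sg0 es0 [] [] = 0"
    by blast
  show "\<forall>sg es. wf_gadget {F} n sg es [] \<longrightarrow> gadget_val n sg es [] [] = 0"
  proof (intro allI impI)
    fix sg es assume w: "wf_gadget {F} n sg es []"
    have eq: "\<forall>v<n. sg0 v = sg v" using w0 w by (auto simp: wf_gadget_def)
    have sgF: "\<forall>v<n. sg v \<in> FF" using w assms(2) by (auto simp: wf_gadget_def)
    have z: "gadget_val n sg es0 [] [] = 0" using z0 gv_sg_cong[OF eq] by simp
    have D0: "distinct (edge_ends ([]@es0))" "set (edge_ends ([]@es0)) = slots n sg"
      using w0 gv_sg_cong[OF eq] by (auto simp: wf_gadget_def)
    have D: "distinct (edge_ends ([]@es))" "set (edge_ends ([]@es)) = slots n sg"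
      using w by (auto simp: wf_gadget_def)
    have "gadget_val n sg ([]@es0) [] [] = 0 \<longleftrightarrow> gadget_val n sg ([]@es) [] [] = 0"
      by (rule match[where Q="\<lambda>es. gadget_val n sg es [] []" and S="slots n sg", OF gv_perm gv_flip
            gv_switch[OF assms(1) sgF] D0 D])
    then show "gadget_val n sg es [] [] = 0" using z by simp
  qed
qed

end
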